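(* Let $n\ge2$, let $\mathbb{K}$ contain a primitive $n$-th root of unity $\zeta_n$, and let $\mathbb{L}/\mathbb{K}$ be a Galois extension of degree $N=n^m$ with Galois group generated by commuting $\theta_1,\dots,\theta_m$ such that $\mathbf{i}\mapsto\boldsymbol\theta^\mathbf{i}$ is a bijection $\Delta(n)^m\to G$. Suppose $\alpha_1,\dots,\alpha_m\in\mathbb{L}^\times$ satisfy $\theta_i(\alpha_j)=\alpha_j$ for $i\ne j$ and $\theta_i(\alpha_i)=\zeta_n\alpha_i$. Order $\Delta(n)^m=\{\mathbf{i}^{(1)},\dots,\mathbf{i}^{(N)}\}$ in reverse lexicographic order ($\mathbf{i}\prec\mathbf{i}'$ iff $i_k<i'_k$ for the largest index $k$ with $i_k\neq i'_k$), and put $\mathcal{B}_m=(\boldsymbol\alpha^{\mathbf{i}^{(1)}},\dots,\boldsymbol\alpha^{\mathbf{i}^{(N)}})$ and $X=(\boldsymbol\zeta^{\mathbf{i}^{(1)}},\dots,\boldsymbol\zeta^{\mathbf{i}^{(N)}})$, the points of $U_n^m$ where $U_n$ is the set of $n$-th roots of unity. Let $0\le r\le m(n-1)$. Then $\mathcal{B}_m$ is a $\mathbb{K}$-basis of $\mathbb{L}$, and for every $\mathbf{j}\in\Delta(n)^m$, \[\mathrm{ev}_{\mathcal{B}_m}(\boldsymbol\theta^\mathbf{j})=\big(\mathbf{x}^\mathbf{j}(\boldsymbol\zeta^{\mathbf{i}^{(1)}}),\dots,\mathbf{x}^\mathbf{j}(\boldsymbol\zeta^{\mathbf{i}^{(N)}})\big)\cdot\mathrm{Diag}(\mathcal{B}_m).\]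 Consequently, if $Y_{r,m}\in\mathbb{K}^{k\times N}$ is the matrix whose rows are the evaluation vectors $(\mathbf{x}^\mathbf{j}(\boldsymbol\zeta^{\mathbf{i}^{(1)}}),\dots,\mathbf{x}^\mathbf{j}(\boldsymbol\zeta^{\mathbf{i}^{(N)}}))$ for $\mathbf{j}\in\Delta(n)^m$ with $|\mathbf{j}|\le r$, then $Y_{r,m}$ is a generator matrix of the Hamming-metric code $\mathrm{HRM}_X(r,m)$, and $Y_{r,m}\,\mathrm{Diag}(\mathcal{B}_m)$ is a generator matrix of $\mathrm{RM}_{\boldsymbol\theta}(r,\mathbf{n})(\mathcal{B}_m)$, $\mathbf{n}=(n,\dots,n)$.
   Context: $\Delta(n)=\{0,\dots,n-1\}$; $\boldsymbol\theta^\mathbf{i}=\theta_1^{i_1}\circ\cdots\circ\theta_m^{i_m}$; $|\mathbf{j}|=\sum_kj_k$; $\boldsymbol\alpha^\mathbf{i}=\prod_k\alpha_k^{i_k}$; $\boldsymbol\zeta^\mathbf{i}=(\zeta_n^{i_1},\dots,\zeta_n^{i_m})\in\mathbb{K}^m$; $\mathbf{x}^\mathbf{j}=x_1^{j_1}\cdots x_m^{j_m}$. $\mathrm{Diag}(\mathcal{B}_m)$ is the $N\times N$ diagonal matrix with diagonal $\mathcal{B}_m$. For $\mathbf{b}\in\mathbb{L}^N$ and $P=\sum b_g g\in\mathbb{L}[G]$, $\mathrm{ev}_\mathbf{b}(P)=(P(b_1),\dots,P(b_N))$ with $P(x)=\sum b_gg(x)$, and $\mathcal{C}(\mathbf{b})=\{\mathrm{ev}_\mathbf{b}(c):c\in\mathcal{C}\}$.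 $\mathrm{RM}_{\boldsymbol\theta}(r,\mathbf{n})=\mathrm{span}_\mathbb{L}\{\boldsymbol\theta^\mathbf{j}:\mathbf{j}\in\Delta(n)^m,|\mathbf{j}|\le r\}$. $\mathrm{HRM}_X(r,m)=\{(p(u_1),\dots,p(u_N)):p\in\mathbb{K}[x_1,\dots,x_m],\deg p\le r\}\subseteq\mathbb{K}^N$ where $u_1,\dots,u_N$ are the points of $X$ in the given order; a generator matrix is a matrix whose rows form a basis of the code. *)

theory Defs
  imports "Jordan_Normal_Form.Matrix"
begin

(* K is a subfield of the field 'l (= the big field L) *)
definition is_subfield :: "'l::field set \<Rightarrow> bool" where
  "is_subfield K \<longleftrightarrow> 0 \<in> K \<and> 1 \<in> K \<and>
     (\<forall>x\<in>K. \<forall>y\<in>K. x + y \<in> K \<and> x - y \<in> K \<and> x * y \<in> K) \<and>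
     (\<forall>x\<in>K. inverse x \<in> K)"

definition Gal :: "'l::field set \<Rightarrow> ('l \<Rightarrow> 'l) set" where
  "Gal K = {\<sigma>. bij \<sigma> \<and> (\<forall>x y. \<sigma> (x + y) = \<sigma> x + \<sigma> y) \<and>
                 (\<forall>x y. \<sigma> (x * y) = \<sigma> x * \<sigma> y) \<and> (\<forall>x\<in>K. \<sigma> x = x)}"

definition is_K_basis :: "'l::field set \<Rightarrow> nat \<Rightarrow> (nat \<Rightarrow> 'l) \<Rightarrow> bool" where
  "is_K_basis K N b \<longleftrightarrow>
     (\<forall>c. (\<forall>t<N. c t \<in> K) \<longrightarrow> (\<Sum>t<N. c t * b t) = 0 \<longrightarrow> (\<forall>t<N. c t = 0)) \<and>
     (\<forall>x. \<exists>c. (\<forall>t<N. c t \<in> K) \<and> x = (\<Sum>t<N. c t * b t))"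

definition galois_ext_of_degree :: "'l::field set \<Rightarrow> nat \<Rightarrow> bool" where
  "galois_ext_of_degree K N \<longleftrightarrow> is_subfield K \<and> (\<exists>b. is_K_basis K N b) \<and>
     finite (Gal K) \<and> card (Gal K) = N"

definition primitive_root :: "nat \<Rightarrow> 'a::field \<Rightarrow> bool" where
  "primitive_root n z \<longleftrightarrow> z ^ n = 1 \<and> (\<forall>k. 0 < k \<and> k < n \<longrightarrow> z ^ k \<noteq> 1)"

(* Delta(n)^m, multi-indices as lists of length m (entry k is index k+1 of the paper) *)
definition Delta :: "nat \<Rightarrow> nat \<Rightarrow> nat list set" where
  "Delta n m = {i. length i = m \<and> (\<forall>k<m. i ! k < n)}"

definition thpow :: "(nat \<Rightarrow> 'l \<Rightarrow> 'l) \<Rightarrow> nat list \<Rightarrow> 'l \<Rightarrow> 'l" where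
  "thpow th i = foldr (\<circ>) (map (\<lambda>k. th k ^^ (i ! k)) [0..<length i]) id"

(* alpha^i = prod_k alpha_k^{i_k};  also x^j evaluated at a point u *)
definition mono :: "(nat \<Rightarrow> 'a::comm_ring_1) \<Rightarrow> nat list \<Rightarrow> 'a" where
  "mono u j = (\<Prod>k<length j. u k ^ (j ! k))"

definition revlex_less :: "nat list \<Rightarrow> nat list \<Rightarrow> bool" where
  "revlex_less i i' \<longleftrightarrow> (\<exists>k<length i. i ! k < i' ! k \<and>
       (\<forall>l. k < l \<and> l < length i \<longrightarrow> i ! l = i' ! l))"

(* the enumeration i^(1),...,i^(N) of Delta(n)^m in reverse lex order (0-based: t < N) *)
definition revlex_enum :: "nat \<Rightarrow> nat \<Rightarrow> nat \<Rightarrow> nat list" where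
  "revlex_enum n m = (THE f. (\<forall>t. t \<ge> n ^ m \<longrightarrow> f t = []) \<and>
      bij_betw f {0..<n ^ m} (Delta n m) \<and>
      (\<forall>s t. s < t \<and> t < n ^ m \<longrightarrow> revlex_less (f s) (f t)))"

definition Bm :: "nat \<Rightarrow> nat \<Rightarrow> (nat \<Rightarrow> 'l::field) \<Rightarrow> nat \<Rightarrow> 'l" where
  "Bm n m alpha t = mono alpha (revlex_enum n m t)"

(* the point zeta^{i^(t)} of U_n^m (coordinate k given as function value at k) *)
definition Xpt :: "nat \<Rightarrow> nat \<Rightarrow> 'l::field \<Rightarrow> nat \<Rightarrow> nat \<Rightarrow> 'l" where
  "Xpt n m z t k = z ^ (revlex_enum n m t ! k)"

definition DiagM :: "nat \<Rightarrow> (nat \<Rightarrow> 'a::zero) \<Rightarrow> 'a mat" where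
  "DiagM N b = mat N N (\<lambda>(i, j). if i = j then b i else 0)"

(* group algebra L[G]: coefficient functions G -> L (supported on G);
   ev_b(P) = (P(b_1),...,P(b_N)) with P(x) = sum_g P_g g(x) *)
definition ev :: "('l \<Rightarrow> 'l) set \<Rightarrow> nat \<Rightarrow> (nat \<Rightarrow> 'l::field) \<Rightarrow> (('l \<Rightarrow> 'l) \<Rightarrow> 'l) \<Rightarrow> 'l vec" where
  "ev G N b P = vec N (\<lambda>t. \<Sum>g\<in>G. P g * g (b t))"

(* the element theta^j of L[G] *)
definition delta :: "('l \<Rightarrow> 'l) \<Rightarrow> ('l \<Rightarrow> 'l) \<Rightarrow> 'l::field" where
  "delta g = (\<lambda>h. if h = g then 1 else 0)"

definition RM_theta :: "(nat \<Rightarrow> 'l \<Rightarrow> 'l) \<Rightarrow> nat \<Rightarrow> nat \<Rightarrow> nat \<Rightarrow> (('l \<Rightarrow> 'l) \<Rightarrow> 'l::field) set" where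
  "RM_theta th n m r = {P. \<exists>c. P = (\<lambda>g. \<Sum>j\<in>{j\<in>Delta n m. sum_list j \<le> r}. c j * delta (thpow th j) g)}"

(* HRM_X(r,m): evaluations at X of polynomials in K[x_1..x_m] of degree <= r;
   a polynomial is given by its coefficients c e in K on monomials x^e, |e| <= r *)
definition HRM :: "'l::field set \<Rightarrow> nat \<Rightarrow> (nat \<Rightarrow> nat \<Rightarrow> 'l) \<Rightarrow> nat \<Rightarrow> nat \<Rightarrow> 'l vec set" where
  "HRM K N X r m = {vec N (\<lambda>t. \<Sum>e\<in>{e. length e = m \<and> sum_list e \<le> r}. c e * mono (X t) e) | c.
       \<forall>e. c e \<in> K}"

definition row_span :: "'a::field set \<Rightarrow> 'a mat \<Rightarrow> 'a vec set" where
  "row_span F Y = {vec (dim_col Y) (\<lambda>t. \<Sum>i<dim_row Y. c i * Y $$ (i, t)) | c.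
       \<forall>i<dim_row Y. c i \<in> F}"

definition rows_indep :: "'a::field set \<Rightarrow> 'a mat \<Rightarrow> bool" where
  "rows_indep F Y \<longleftrightarrow> (\<forall>c. (\<forall>i<dim_row Y. c i \<in> F) \<longrightarrow>
      (\<forall>t<dim_col Y. (\<Sum>i<dim_row Y. c i * Y $$ (i, t)) = 0) \<longrightarrow> (\<forall>i<dim_row Y. c i = 0))"

definition gen_matrix :: "'a::field set \<Rightarrow> 'a vec set \<Rightarrow> 'a mat \<Rightarrow> bool" where
  "gen_matrix F C Y \<longleftrightarrow> rows_indep F Y \<and> row_span F Y = C"

end

theory Submission
  imports Defs
begin


section \<open>Subfield closure\<close>

context fixes K :: "'l::field set" assumes sf: "is_subfield K"
begin
lemma sf0: "0 \<in> K" using sf unfolding is_subfield_def by blast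
lemma sf1: "1 \<in> K" using sf unfolding is_subfield_def by blast
lemma sf_add: "x \<in> K \<Longrightarrow> y \<in> K \<Longrightarrow> x + y \<in> K" using sf unfolding is_subfield_def by blast
lemma sf_diff: "x \<in> K \<Longrightarrow> y \<in> K \<Longrightarrow> x - y \<in> K" using sf unfolding is_subfield_def by blast
lemma sf_mult: "x \<in> K \<Longrightarrow> y \<in> K \<Longrightarrow> x * y \<in> K" using sf unfolding is_subfield_def by blast
lemma sf_inv: "x \<in> K \<Longrightarrow> inverse x \<in> K" using sf unfolding is_subfield_def by blast
lemma sf_div: "x \<in> K \<Longrightarrow> y \<in> K \<Longrightarrow> x / y \<in> K"
  by (simp add: divide_inverse sf_inv sf_mult)
lemma sf_uminus: "x \<in> K \<Longrightarrow> - x \<in> K"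
  using sf_diff[OF sf0, of x] by simp
lemma sf_pow: "x \<in> K \<Longrightarrow> x ^ k \<in> K"
  by (induction k) (auto intro: sf1 sf_mult)
lemma sf_sum: "(\<And>a. a \<in> A \<Longrightarrow> f a \<in> K) \<Longrightarrow> sum f A \<in> K"
proof (induction A rule: infinite_finite_induct)
  case (infinite A) then show ?case by (simp add: sf0)
next
  case empty then show ?case by (simp add: sf0)
next
  case (insert x F) then show ?case by (simp add: sf_add)
qed
lemma sf_prod: "(\<And>a. a \<in> A \<Longrightarrow> f a \<in> K) \<Longrightarrow> prod f A \<in> K"
proof (induction A rule: infinite_finite_induct)
  case (infinite A) then show ?case by (simp add: sf1)
next
  case empty then show ?case by (simp add: sf1)
next
  case (insert x F) then show ?case by (simp add: sf_mult)
qed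
end

section \<open>Galois automorphisms\<close>

context fixes K :: "'l::field set" and \<sigma> assumes sg: "\<sigma> \<in> Gal K"
begin
lemma gal_add: "\<sigma> (x + y) = \<sigma> x + \<sigma> y" using sg unfolding Gal_def by blast
lemma gal_mult: "\<sigma> (x * y) = \<sigma> x * \<sigma> y" using sg unfolding Gal_def by blast
lemma gal_fix: "x \<in> K \<Longrightarrow> \<sigma> x = x" using sg unfolding Gal_def by blast
lemma gal_bij: "bij \<sigma>" using sg unfolding Gal_def by blast
lemma gal_zero: "\<sigma> 0 = 0"
  using gal_add[of 0 0] by (metis add.right_neutral add_left_cancel)
lemma gal_sum: "\<sigma> (sum f A) = (\<Sum>a\<in>A. \<sigma> (f a))"
  by (induction A rule: infinite_finite_induct) (auto simp: gal_zero gal_add)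
lemma gal_one_aux: "\<sigma> 1 = 1"
proof -
  obtain x where x: "\<sigma> x = 1" using gal_bij by (metis bij_pointE)
  have "\<sigma> 1 * \<sigma> x = \<sigma> x" using gal_mult[of 1 x] by simp
  then show ?thesis using x by simp
qed
lemma gal_prod: "\<sigma> (prod f A) = (\<Prod>a\<in>A. \<sigma> (f a))"
  by (induction A rule: infinite_finite_induct) (auto simp: gal_one_aux gal_mult)
lemma gal_pow: "\<sigma> (x ^ k) = \<sigma> x ^ k"
  by (induction k) (auto simp: gal_one_aux gal_mult)
end

section \<open>Enumerations\<close>

lemma finite_max_ex:
  assumes "finite A" "A \<noteq> {}"
    and tr: "\<And>x y w. x \<in> A \<Longrightarrow> y \<in> A \<Longrightarrow> w \<in> A \<Longrightarrow> R x y \<Longrightarrow> R y w \<Longrightarrow> R x w"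
    and tot: "\<And>x y. x \<in> A \<Longrightarrow> y \<in> A \<Longrightarrow> x \<noteq> y \<Longrightarrow> R x y \<or> R y x"
  shows "\<exists>a\<in>A. \<forall>x\<in>A. x \<noteq> a \<longrightarrow> R x a"
  using assms(1,2) tr tot
proof (induction A rule: finite_ne_induct)
  case (singleton x) then show ?case by auto
next
  case (insert x F)
  then obtain a where a: "a \<in> F" "\<forall>y\<in>F. y \<noteq> a \<longrightarrow> R y a" by (metis insertCI)
  show ?case
  proof (cases "R x a")
    case True then show ?thesis using a by auto
  next
    case False
    have ax: "a \<noteq> x" using a(1) insert.hyps(3) by auto
    have "R a x" using insert.prems(2)[of a x] a(1) ax False by auto
    have "\<forall>y\<in>insert x F. y \<noteq> x \<longrightarrow> R y x"
    proof (intro ballI impI)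
      fix y assume y: "y \<in> insert x F" "y \<noteq> x"
      then have yF: "y \<in> F" by simp
      show "R y x"
      proof (cases "y = a")
        case True then show ?thesis using \<open>R a x\<close> by simp
      next
        case False
        then have "R y a" using a(2) yF by simp
        then show ?thesis using insert.prems(1)[of y a x] yF a(1) \<open>R a x\<close> by simp
      qed
    qed
    then show ?thesis by blast
  qed
qed

lemma enum_exists:
  assumes "finite A"
    and tr: "\<forall>x\<in>A. \<forall>y\<in>A. \<forall>w\<in>A. R x y \<longrightarrow> R y w \<longrightarrow> R x w"
    and tot: "\<forall>x\<in>A. \<forall>y\<in>A. x \<noteq> y \<longrightarrow> R x y \<or> R y x"
  shows "\<exists>f. bij_betw f {0..<card A} A \<and> (\<forall>s t. s < t \<and> t < card A \<longrightarrow> R (f s) (f t))"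
  using assms
proof (induction "card A" arbitrary: A)
  case 0
  have "A = {}" using "0.prems"(1) "0.hyps" by simp
  then show ?case by (simp add: bij_betw_def)
next
  case (Suc p)
  have ne: "A \<noteq> {}" using Suc.hyps(2) by auto
  have tr1: "\<And>x y w. x \<in> A \<Longrightarrow> y \<in> A \<Longrightarrow> w \<in> A \<Longrightarrow> R x y \<Longrightarrow> R y w \<Longrightarrow> R x w"
    using Suc.prems(2) by blast
  have tot1: "\<And>x y. x \<in> A \<Longrightarrow> y \<in> A \<Longrightarrow> x \<noteq> y \<Longrightarrow> R x y \<or> R y x"
    using Suc.prems(3) by blast
  have "\<exists>a\<in>A. \<forall>x\<in>A. x \<noteq> a \<longrightarrow> R x a"
    by (rule finite_max_ex[OF Suc.prems(1) ne tr1 tot1])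
  then obtain a where a: "a \<in> A" "\<forall>x\<in>A. x \<noteq> a \<longrightarrow> R x a" by blast
  define B where "B = A - {a}"
  have cB: "card B = p" using Suc.hyps(2) a(1) Suc.prems(1) by (simp add: B_def)
  have finB: "finite B" using Suc.prems(1) by (simp add: B_def)
  have trB: "\<forall>x\<in>B. \<forall>y\<in>B. \<forall>w\<in>B. R x y \<longrightarrow> R y w \<longrightarrow> R x w"
    using Suc.prems(2) unfolding B_def by blast
  have totB: "\<forall>x\<in>B. \<forall>y\<in>B. x \<noteq> y \<longrightarrow> R x y \<or> R y x"
    using Suc.prems(3) unfolding B_def by blast
  obtain f where f: "bij_betw f {0..<p} B" "\<forall>s t. s < t \<and> t < p \<longrightarrow> R (f s) (f t)"
    using Suc.hyps(1)[OF cB[symmetric] finB trB totB] cB by auto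
  define g where "g t = (if t = p then a else f t)" for t
  have fB: "f t \<in> B" if "t < p" for t using bij_betwE[OF f(1)] that by auto
  have "inj_on g {0..<Suc p}"
  proof (rule inj_onI)
    fix s t assume st: "s \<in> {0..<Suc p}" "t \<in> {0..<Suc p}" "g s = g t"
    show "s = t"
    proof (cases "s = p"; cases "t = p")
      assume "s \<noteq> p" "t \<noteq> p"
      then show ?thesis using st f(1) unfolding g_def bij_betw_def inj_on_def by auto
    next
      assume "s = p" "t \<noteq> p"
      then have "f t \<in> B" "g s = a" "g t = f t" using fB st by (auto simp: g_def)
      then show ?thesis using st(3) by (simp add: B_def)
    next
      assume "s \<noteq> p" "t = p"
      then have "f s \<in> B" "g t = a" "g s = f s" using fB st by (auto simp: g_def)
      then show ?thesis using st(3) by (simp add: B_def)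
    qed simp
  qed
  moreover have "g ` {0..<Suc p} = A"
  proof -
    have "{0..<Suc p} = insert p {0..<p}" by auto
    then have "g ` {0..<Suc p} = insert (g p) (g ` {0..<p})" by simp
    moreover have "g ` {0..<p} = f ` {0..<p}" unfolding g_def by (intro image_cong) auto
    ultimately have "g ` {0..<Suc p} = insert a (f ` {0..<p})" by (simp add: g_def)
    also have "\<dots> = A" using f(1) a(1) unfolding bij_betw_def B_def by auto
    finally show ?thesis .
  qed
  moreover have "R (g s) (g t)" if "s < t" "t < Suc p" for s t
  proof (cases "t = p")
    case True
    then have "s < p" using that by simp
    then show ?thesis using fB[of s] a True unfolding g_def B_def by auto
  next
    case False
    then show ?thesis using that f(2) unfolding g_def by auto
  qed
  ultimately have "bij_betw g {0..<card A} A" using Suc.hyps(2) unfolding bij_betw_def by metis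
  moreover have "\<forall>s t. s < t \<and> t < card A \<longrightarrow> R (g s) (g t)"
    using \<open>\<And>s t. s < t \<Longrightarrow> t < Suc p \<Longrightarrow> R (g s) (g t)\<close> Suc.hyps(2) by simp
  ultimately show ?case by blast
qed

lemma enum_unique_aux:
  fixes N :: nat
  assumes f: "bij_betw f {0..<N} A" and g: "bij_betw g {0..<N} A"
    and fm: "\<forall>s t. s < t \<and> t < N \<longrightarrow> R (f s) (f t)"
    and gm: "\<forall>s t. s < t \<and> t < N \<longrightarrow> R (g s) (g t)"
    and tr: "\<And>x y w. x \<in> A \<Longrightarrow> y \<in> A \<Longrightarrow> w \<in> A \<Longrightarrow> R x y \<Longrightarrow> R y w \<Longrightarrow> R x w"
    and irr: "\<And>x. x \<in> A \<Longrightarrow> \<not> R x x"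
    and IH: "\<forall>s'<s. f s' = g s'" and s: "s < N" and R: "R (f s) (g s)"
  shows False
proof -
  have "f s \<in> A" using bij_betwE[OF f] s by auto
  then obtain s'' where s'': "s'' < N" "f s = g s''" using g by (auto simp: bij_betw_def)
  consider "s'' < s" | "s'' = s" | "s'' > s" by linarith
  then show False
  proof cases
    case 1
    then have "f s'' = f s" using IH s'' by auto
    then have "s'' = s" using f 1 s s'' unfolding bij_betw_def inj_on_def by auto
    then show False using 1 by simp
  next
    case 2 then show False using R s'' irr \<open>f s \<in> A\<close> by auto
  next
    case 3
    then have "R (g s) (f s)" using gm s'' by auto
    moreover have "g s \<in> A" using g s by (auto simp: bij_betw_def)
    ultimately show False using tr[of "f s" "g s" "f s"] R irr \<open>f s \<in> A\<close> by auto
  qed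
qed

lemma enum_unique:
  fixes N :: nat
  assumes f: "bij_betw f {0..<N} A" and g: "bij_betw g {0..<N} A"
    and fm: "\<forall>s t. s < t \<and> t < N \<longrightarrow> R (f s) (f t)"
    and gm: "\<forall>s t. s < t \<and> t < N \<longrightarrow> R (g s) (g t)"
    and tr: "\<And>x y w. x \<in> A \<Longrightarrow> y \<in> A \<Longrightarrow> w \<in> A \<Longrightarrow> R x y \<Longrightarrow> R y w \<Longrightarrow> R x w"
    and irr: "\<And>x. x \<in> A \<Longrightarrow> \<not> R x x"
    and tot: "\<And>x y. x \<in> A \<Longrightarrow> y \<in> A \<Longrightarrow> x \<noteq> y \<Longrightarrow> R x y \<or> R y x"
  shows "s < N \<Longrightarrow> f s = g s"
proof (induction s rule: less_induct)
  case (less s)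
  show ?case
  proof (rule ccontr)
    assume ne: "f s \<noteq> g s"
    have "f s \<in> A" "g s \<in> A" using bij_betwE[OF f] bij_betwE[OF g] less.prems by auto
    then consider "R (f s) (g s)" | "R (g s) (f s)" using tot ne by blast
    then show False
    proof cases
      case 1
      have IH': "\<forall>s'<s. f s' = g s'" using less.IH less.prems by auto
      show False using enum_unique_aux[OF f g fm gm tr irr IH' less.prems 1] .
    next
      case 2
      have IH': "\<forall>s'<s. g s' = f s'" using less.IH less.prems by auto
      show False using enum_unique_aux[OF g f gm fm tr irr IH' less.prems 2] .
    qed
  qed
qed




lemma rl_irrefl: "\<not> revlex_less i i"
  unfolding revlex_less_def by auto

lemma rl_trans:
  assumes "length i' = length i" "length i'' = length i" "revlex_less i i'" "revlex_less i' i''"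
  shows "revlex_less i i''"
proof -
  obtain k where k: "k < length i" "i ! k < i' ! k" "\<forall>l. k < l \<and> l < length i \<longrightarrow> i ! l = i' ! l"
    using assms(3) unfolding revlex_less_def by blast
  obtain k' where k': "k' < length i" "i' ! k' < i'' ! k'" "\<forall>l. k' < l \<and> l < length i \<longrightarrow> i' ! l = i'' ! l"
    using assms(4,1) unfolding revlex_less_def by auto
  consider "k < k'" | "k = k'" | "k' < k" by linarith
  then show ?thesis
  proof cases
    case 1
    then have "i ! k' < i'' ! k'" using k k' by auto
    moreover have "\<forall>l. k' < l \<and> l < length i \<longrightarrow> i ! l = i'' ! l" using k k' 1 by auto
    ultimately show ?thesis using k' unfolding revlex_less_def by blast
  next
    case 2
    then show ?thesis using k k' unfolding revlex_less_def by force
  next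
    case 3
    then have "i ! k < i'' ! k" using k k' by auto
    moreover have "\<forall>l. k < l \<and> l < length i \<longrightarrow> i ! l = i'' ! l" using k k' 3 by auto
    ultimately show ?thesis using k unfolding revlex_less_def by blast
  qed
qed

lemma rl_total:
  assumes "length i' = length i" "i \<noteq> i'"
  shows "revlex_less i i' \<or> revlex_less i' i"
proof -
  define S where "S = {k. k < length i \<and> i ! k \<noteq> i' ! k}"
  have "S \<noteq> {}"
  proof
    assume "S = {}"
    then have "i = i'" using assms(1) by (intro nth_equalityI) (auto simp: S_def)
    then show False using assms(2) by simp
  qed
  moreover have fS: "finite S" unfolding S_def by auto
  ultimately have kS: "Max S \<in> S" by simp
  define k where "k = Max S"
  have k: "k < length i" "i ! k \<noteq> i' ! k" using kS unfolding k_def S_def by auto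
  have above: "\<forall>l. k < l \<and> l < length i \<longrightarrow> i ! l = i' ! l"
  proof (intro allI impI)
    fix l assume l: "k < l \<and> l < length i"
    show "i ! l = i' ! l"
    proof (rule ccontr)
      assume "i ! l \<noteq> i' ! l"
      then have "l \<in> S" using l by (simp add: S_def)
      then have "l \<le> k" using fS unfolding k_def by simp
      then show False using l by simp
    qed
  qed
  show ?thesis
  proof (cases "i ! k < i' ! k")
    case True then show ?thesis using k above unfolding revlex_less_def by blast
  next
    case False
    then have "i' ! k < i ! k" using k by simp
    moreover have "\<forall>l. k < l \<and> l < length i' \<longrightarrow> i' ! l = i ! l" using above assms(1) by auto
    ultimately show ?thesis using k assms(1) unfolding revlex_less_def by auto
  qed
qed

lemma revlex_enum_bij:
  assumes fin: "finite (Delta n m)" and card: "card (Delta n m) = n ^ m"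
  shows "bij_betw (revlex_enum n m) {0..<n ^ m} (Delta n m)"
proof -
  let ?A = "Delta n m"
  have len: "\<And>x. x \<in> ?A \<Longrightarrow> length x = m" unfolding Delta_def by auto
  have tr: "\<forall>x\<in>?A. \<forall>y\<in>?A. \<forall>w\<in>?A. revlex_less x y \<longrightarrow> revlex_less y w \<longrightarrow> revlex_less x w"
  proof (intro ballI impI)
    fix x y w assume "x \<in> ?A" "y \<in> ?A" "w \<in> ?A" "revlex_less x y" "revlex_less y w"
    then show "revlex_less x w" using rl_trans[of y x w] len by simp
  qed
  have tot: "\<forall>x\<in>?A. \<forall>y\<in>?A. x \<noteq> y \<longrightarrow> revlex_less x y \<or> revlex_less y x"
  proof (intro ballI impI)
    fix x y assume "x \<in> ?A" "y \<in> ?A" "x \<noteq> y"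
    then show "revlex_less x y \<or> revlex_less y x" using rl_total[of y x] len by simp
  qed
  have tr1: "\<And>x y w. x \<in> ?A \<Longrightarrow> y \<in> ?A \<Longrightarrow> w \<in> ?A \<Longrightarrow> revlex_less x y \<Longrightarrow> revlex_less y w \<Longrightarrow> revlex_less x w"
    using tr by blast
  have tot1: "\<And>x y. x \<in> ?A \<Longrightarrow> y \<in> ?A \<Longrightarrow> x \<noteq> y \<Longrightarrow> revlex_less x y \<or> revlex_less y x"
    using tot by blast
  have irr: "\<And>x. x \<in> ?A \<Longrightarrow> \<not> revlex_less x x" using rl_irrefl by blast
  obtain f where f: "bij_betw f {0..<n ^ m} ?A" "\<forall>s t. s < t \<and> t < n ^ m \<longrightarrow> revlex_less (f s) (f t)"
    using enum_exists[OF fin tr tot] card by auto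
  define g where "g t = (if t < n ^ m then f t else [])" for t
  let ?P = "\<lambda>f. (\<forall>t. t \<ge> n ^ m \<longrightarrow> f t = []) \<and>
      bij_betw f {0..<n ^ m} (Delta n m) \<and>
      (\<forall>s t. s < t \<and> t < n ^ m \<longrightarrow> revlex_less (f s) (f t))"
  have "bij_betw g {0..<n ^ m} ?A" using f(1) by (rule bij_betw_cong[THEN iffD1, rotated]) (simp add: g_def)
  then have Pg: "?P g" using f(2) by (auto simp: g_def)
  have uq: "h = g" if "?P h" for h
  proof
    fix t show "h t = g t"
    proof (cases "t < n ^ m")
      case True
      have hb: "bij_betw h {0..<n ^ m} ?A" and hm: "\<forall>s t. s < t \<and> t < n ^ m \<longrightarrow> revlex_less (h s) (h t)"
        using that by blast+
      have gb: "bij_betw g {0..<n ^ m} ?A" and gm: "\<forall>s t. s < t \<and> t < n ^ m \<longrightarrow> revlex_less (g s) (g t)"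
        using Pg by blast+
      show ?thesis by (rule enum_unique[OF hb gb hm gm tr1 irr tot1 True])
    next
      case False then show ?thesis using that by (simp add: g_def)
    qed
  qed
  have "revlex_enum n m = g" unfolding revlex_enum_def
    by (rule the_equality) (use Pg uq in blast)+
  then show ?thesis using Pg by simp
qed




lemma mult_DiagM_index:
  assumes "dim_col A = N" "i < dim_row A" "t < N"
  shows "(A * DiagM N b) $$ (i, t) = A $$ (i, t) * b t"
proof -
  have "(A * DiagM N b) $$ (i, t) = (\<Sum>s\<in>{0..<N}. A $$ (i, s) * (if s = t then b s else 0))"
    using assms by (simp add: DiagM_def scalar_prod_def)
  also have "\<dots> = (\<Sum>s\<in>{0..<N}. if s = t then A $$ (i, t) * b t else 0)"
    by (rule sum.cong) auto
  also have "\<dots> = A $$ (i, t) * b t" using assms(3) by simp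
  finally show ?thesis .
qed

lemma dim_DiagM[simp]: "dim_row (DiagM N b) = N" "dim_col (DiagM N b) = N"
  by (simp_all add: DiagM_def)

lemma foldr_comp: "foldr (\<circ>) fs g = foldr (\<circ>) fs id \<circ> g"
  by (induction fs) auto

locale galsetup =
  fixes K :: "'l::field set" and n m N :: nat and z :: 'l
    and th :: "nat \<Rightarrow> 'l \<Rightarrow> 'l" and alpha :: "nat \<Rightarrow> 'l"
  assumes n2: "n \<ge> 2"
    and N_def: "N = n ^ m"
    and gal: "galois_ext_of_degree K N"
    and zK: "z \<in> K" and zprim: "primitive_root n z"
    and thG: "\<forall>k<m. th k \<in> Gal K"
    and bij: "bij_betw (thpow th) (Delta n m) (Gal K)"
    and anz: "\<forall>k<m. alpha k \<noteq> 0"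
    and a_fix: "\<forall>k<m. \<forall>l<m. k \<noteq> l \<longrightarrow> th k (alpha l) = alpha l"
    and a_mul: "\<forall>k<m. th k (alpha k) = z * alpha k"
begin

abbreviation "E \<equiv> revlex_enum n m"
abbreviation "B \<equiv> Bm n m alpha"
abbreviation "X \<equiv> Xpt n m z"

lemma sf: "is_subfield K" using gal unfolding galois_ext_of_degree_def by blast
lemma finG: "finite (Gal K)" using gal unfolding galois_ext_of_degree_def by blast
lemma cardG: "card (Gal K) = N" using gal unfolding galois_ext_of_degree_def by blast
lemma K_basis_ex: "\<exists>b. is_K_basis K N b" using gal unfolding galois_ext_of_degree_def by blast
lemma finD: "finite (Delta n m)" using bij finG bij_betw_finite by blast
lemma cardD: "card (Delta n m) = N" using bij cardG bij_betw_same_card by metis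

lemma Ebij: "bij_betw E {0..<N} (Delta n m)"
  using revlex_enum_bij[OF finD] cardD N_def by simp

lemma E_in: "t < N \<Longrightarrow> E t \<in> Delta n m" using bij_betwE[OF Ebij] by auto
lemma E_len: "t < N \<Longrightarrow> length (E t) = m" using E_in unfolding Delta_def by auto
lemma E_lt: "t < N \<Longrightarrow> k < m \<Longrightarrow> E t ! k < n" using E_in unfolding Delta_def by auto
lemma E_inj: "s < N \<Longrightarrow> t < N \<Longrightarrow> E s = E t \<Longrightarrow> s = t"
  using Ebij unfolding bij_betw_def inj_on_def by auto

lemma z_pow_n: "z ^ n = 1" using zprim unfolding primitive_root_def by blast
lemma z_nz: "z \<noteq> 0" using z_pow_n n2 by (metis not_numeral_le_zero power_0_left zero_neq_one)

lemma z_pow_inj: assumes "a < n" "b < n" "z ^ a = z ^ b" shows "a = b"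
proof (rule ccontr)
  assume ne: "a \<noteq> b"
  have gen: "False" if "x < y" "y < n" "z ^ x = z ^ y" for x y
  proof -
    have "z ^ y = z ^ x * z ^ (y - x)" using that(1) by (simp add: power_add[symmetric])
    then have "z ^ (y - x) = 1" using that(3) z_nz by simp
    moreover have "0 < y - x" "y - x < n" using that by auto
    ultimately show False using zprim unfolding primitive_root_def by blast
  qed
  show False
  proof (cases "a < b")
    case True then show False using gen[of a b] assms by simp
  next
    case False then have "b < a" using ne by simp
    then show False using gen[of b a] assms by simp
  qed
qed

lemma th_gal: "k < m \<Longrightarrow> th k \<in> Gal K" using thG by blast
lemma thpow_gal: "j \<in> Delta n m \<Longrightarrow> thpow th j \<in> Gal K" using bij_betwE[OF bij] by blast

lemma mono_alpha_nz: "length i = m \<Longrightarrow> mono alpha i \<noteq> 0"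
  unfolding mono_def using anz by (simp add: prod_zero_iff)

lemma B_nz: "t < N \<Longrightarrow> B t \<noteq> 0"
  unfolding Bm_def using mono_alpha_nz E_len by blast

lemma eig:
  assumes "length i = m" "k < m"
  shows "th k (mono alpha i) = z ^ (i ! k) * mono alpha i"
proof -
  have g: "th k \<in> Gal K" using th_gal assms(2) .
  have "th k (mono alpha i) = (\<Prod>l<m. th k (alpha l ^ (i ! l)))"
    unfolding mono_def using assms(1) gal_prod[OF g] by simp
  also have "\<dots> = (\<Prod>l<m. (if l = k then z ^ (i ! k) else 1) * alpha l ^ (i ! l))"
  proof (rule prod.cong)
    fix l assume "l \<in> {..<m}"
    then show "th k (alpha l ^ (i ! l)) = (if l = k then z ^ (i ! k) else 1) * alpha l ^ (i ! l)"
      using a_fix a_mul assms(2) by (auto simp: gal_pow[OF g] power_mult_distrib)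
  qed simp
  also have "\<dots> = (\<Prod>l<m. (if l = k then z ^ (i ! k) else 1)) * (\<Prod>l<m. alpha l ^ (i ! l))"
    by (rule prod.distrib)
  also have "\<dots> = z ^ (i ! k) * mono alpha i"
    using assms by (simp add: mono_def)
  finally show ?thesis .
qed

lemma pow_eig:
  assumes "k < m" "th k y = c * y" "c \<in> K"
  shows "(th k ^^ a) y = c ^ a * y"
proof (induction a)
  case 0 then show ?case by simp
next
  case (Suc a)
  have g: "th k \<in> Gal K" using th_gal assms(1) .
  have "(th k ^^ Suc a) y = th k (c ^ a * y)" using Suc by simp
  also have "\<dots> = c ^ a * (c * y)"
    using gal_mult[OF g] gal_fix[OF g] sf_pow[OF sf assms(3)] assms(2) by simp
  finally show ?case by simp
qed

lemma eig_pre: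
  assumes "p \<le> m" "\<forall>k<m. th k y = z ^ (e k) * y"
  shows "foldr (\<circ>) (map (\<lambda>k. th k ^^ (j ! k)) [0..<p]) id y = (\<Prod>k<p. (z ^ e k) ^ (j ! k)) * y"
  using assms
proof (induction p arbitrary: y)
  case 0 then show ?case by simp
next
  case (Suc p)
  define c where "c = (z ^ e p) ^ (j ! p)"
  have cK: "c \<in> K" unfolding c_def using sf_pow[OF sf sf_pow[OF sf zK]] by blast
  have step: "(th p ^^ (j ! p)) y = c * y"
    unfolding c_def using pow_eig[of p y "z ^ e p"] Suc.prems sf_pow[OF sf zK] by simp
  have eig': "\<forall>k<m. th k (c * y) = z ^ (e k) * (c * y)"
  proof (intro allI impI)
    fix k assume k: "k < m"
    have g: "th k \<in> Gal K" using th_gal k .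
    show "th k (c * y) = z ^ (e k) * (c * y)"
      using gal_mult[OF g] gal_fix[OF g cK] Suc.prems(2) k by simp
  qed
  have "foldr (\<circ>) (map (\<lambda>k. th k ^^ (j ! k)) [0..<Suc p]) id y
      = foldr (\<circ>) (map (\<lambda>k. th k ^^ (j ! k)) [0..<p]) id ((th p ^^ (j ! p)) y)"
    by (simp add: foldr_comp[of _ "th p ^^ (j ! p)"])
  also have "\<dots> = foldr (\<circ>) (map (\<lambda>k. th k ^^ (j ! k)) [0..<p]) id (c * y)"
    by (simp only: step)
  also have "\<dots> = (\<Prod>k<p. (z ^ e k) ^ (j ! k)) * (c * y)"
    by (rule Suc.IH) (use Suc.prems eig' in auto)
  also have "\<dots> = (\<Prod>k<Suc p. (z ^ e k) ^ (j ! k)) * y"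
    by (simp add: c_def mult.assoc)
  finally show ?case .
qed

lemma thpow_eig:
  assumes "length j = m" "\<forall>k<m. th k y = z ^ (e k) * y"
  shows "thpow th j y = (\<Prod>k<m. (z ^ e k) ^ (j ! k)) * y"
  unfolding thpow_def using eig_pre[of m y e j] assms by simp

lemma thpow_B:
  assumes "j \<in> Delta n m" "t < N"
  shows "thpow th j (B t) = mono (X t) j * B t"
proof -
  have lj: "length j = m" using assms(1) unfolding Delta_def by auto
  have "\<forall>k<m. th k (B t) = z ^ (E t ! k) * B t"
    unfolding Bm_def using eig E_len assms(2) by blast
  then have "thpow th j (B t) = (\<Prod>k<m. (z ^ (E t ! k)) ^ (j ! k)) * B t"
    using thpow_eig[OF lj] by blast
  also have "\<dots> = mono (X t) j * B t"
    unfolding mono_def Xpt_def using lj by simp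
  finally show ?thesis .
qed

lemma ev_delta:
  assumes "\<sigma> \<in> Gal K" "t < N"
  shows "ev (Gal K) N b (delta \<sigma>) $ t = \<sigma> (b t)"
proof -
  have "ev (Gal K) N b (delta \<sigma>) $ t = (\<Sum>g\<in>Gal K. (if g = \<sigma> then 1 else 0) * g (b t))"
    using assms(2) by (simp add: ev_def delta_def)
  also have "\<dots> = (\<Sum>g\<in>Gal K. if g = \<sigma> then \<sigma> (b t) else 0)"
    by (rule sum.cong) auto
  also have "\<dots> = \<sigma> (b t)" using assms(1) finG by simp
  finally show ?thesis .
qed

lemma part2:
  assumes "j \<in> Delta n m"
  shows "mat_of_rows N [ev (Gal K) N B (delta (thpow th j))]
         = mat_of_rows N [vec N (\<lambda>t. mono (X t) j)] * DiagM N B"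
proof (rule eq_matI)
  fix i t assume it: "i < dim_row (mat_of_rows N [vec N (\<lambda>t. mono (X t) j)] * DiagM N B)"
     "t < dim_col (mat_of_rows N [vec N (\<lambda>t. mono (X t) j)] * DiagM N B)"
  then have i0: "i = 0" and t: "t < N" by auto
  have "(mat_of_rows N [vec N (\<lambda>t. mono (X t) j)] * DiagM N B) $$ (i, t)
      = mono (X t) j * B t"
    using mult_DiagM_index[of "mat_of_rows N [vec N (\<lambda>t. mono (X t) j)]" N i t B] i0 t
    by (simp add: mat_of_rows_index)
  moreover have "mat_of_rows N [ev (Gal K) N B (delta (thpow th j))] $$ (i, t) = mono (X t) j * B t"
    using i0 t by (simp add: mat_of_rows_index ev_delta thpow_gal[OF assms] thpow_B[OF assms])
  ultimately show "mat_of_rows N [ev (Gal K) N B (delta (thpow th j))] $$ (i, t) =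
       (mat_of_rows N [vec N (\<lambda>t. mono (X t) j)] * DiagM N B) $$ (i, t)" by simp
qed auto

end



definition kindep :: "'l::field set \<Rightarrow> nat \<Rightarrow> (nat \<Rightarrow> 'l) \<Rightarrow> bool" where
  "kindep K p v \<longleftrightarrow> (\<forall>c. (\<forall>i<p. c i \<in> K) \<longrightarrow> (\<Sum>i<p. c i * v i) = 0 \<longrightarrow> (\<forall>i<p. c i = 0))"

lemma kindepD: "kindep K p v \<Longrightarrow> \<forall>i<p. c i \<in> K \<Longrightarrow> (\<Sum>i<p. c i * v i) = 0 \<Longrightarrow> i < p \<Longrightarrow> c i = 0"
  unfolding kindep_def by blast

lemma sum_skip:
  fixes f :: "nat \<Rightarrow> 'a::comm_monoid_add"
  assumes "i0 < Suc p'"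
  shows "(\<Sum>l<Suc p'. f l) = f i0 + (\<Sum>i<p'. f (if i < i0 then i else Suc i))"
proof -
  define \<sigma> where "\<sigma> i = (if i < i0 then i else Suc i)" for i
  have inj: "inj_on \<sigma> {..<p'}" unfolding \<sigma>_def inj_on_def by auto
  have img: "{..<Suc p'} = insert i0 (\<sigma> ` {..<p'})"
  proof -
    have "l \<in> \<sigma> ` {..<p'}" if l: "l < Suc p'" "l \<noteq> i0" for l
    proof (cases "l < i0")
      case True then have "\<sigma> l = l" "l < p'" using assms by (auto simp: \<sigma>_def)
      then show ?thesis by (metis imageI lessThan_iff)
    next
      case False
      then have "\<sigma> (l - 1) = l" "l - 1 < p'" using l by (auto simp: \<sigma>_def)
      then show ?thesis by (metis imageI lessThan_iff)
    qed
    moreover have "\<sigma> ` {..<p'} \<subseteq> {..<Suc p'}" by (auto simp: \<sigma>_def)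
    ultimately show ?thesis using assms by auto
  qed
  have notin: "i0 \<notin> \<sigma> ` {..<p'}" unfolding \<sigma>_def by auto
  have "(\<Sum>l<Suc p'. f l) = f i0 + sum f (\<sigma> ` {..<p'})"
    unfolding img using notin by simp
  also have "sum f (\<sigma> ` {..<p'}) = (\<Sum>i<p'. f (\<sigma> i))" using sum.reindex[OF inj] by simp
  finally show ?thesis unfolding \<sigma>_def .
qed

lemma lin_aux: "((x1::'a::field) + a1 * w) - r * (x0 + a0 * w) = x1 - r * x0 + (a1 - r * a0) * w"
  by (simp add: algebra_simps)

lemma steinitz:
  fixes K :: "'a::field set" and v w :: "nat \<Rightarrow> 'a"
  assumes sf: "is_subfield K"
  shows "(\<forall>i<p. \<exists>c. (\<forall>t<q. c t \<in> K) \<and> v i = (\<Sum>t<q. c t * w t)) \<Longrightarrow> kindep K p v \<Longrightarrow> p \<le> q"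
proof (induction q arbitrary: p v)
  case 0
  then have v0: "\<forall>i<p. v i = 0" by simp
  show ?case
  proof (rule ccontr)
    assume "\<not> p \<le> 0"
    then have "0 < p" by simp
    have "(\<lambda>_. (1::'a)) 0 = 0"
      by (rule kindepD[OF "0.prems"(2), where c="\<lambda>_. 1" and i=0]) (use v0 sf1[OF sf] \<open>0 < p\<close> in auto)
    then show False by simp
  qed
next
  case (Suc q)
  have "\<forall>i. \<exists>c. i < p \<longrightarrow> (\<forall>t<Suc q. c t \<in> K) \<and> v i = (\<Sum>t<Suc q. c t * w t)"
    using Suc.prems(1) by blast
  then have "\<exists>C. \<forall>i. i < p \<longrightarrow> (\<forall>t<Suc q. C i t \<in> K) \<and> v i = (\<Sum>t<Suc q. C i t * w t)"
    by (rule choice)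
  then obtain C where C0: "\<forall>i. i < p \<longrightarrow> (\<forall>t<Suc q. C i t \<in> K) \<and> v i = (\<Sum>t<Suc q. C i t * w t)"
    by (rule exE)
  have C: "(\<forall>t<Suc q. C i t \<in> K) \<and> v i = (\<Sum>t<Suc q. C i t * w t)" if "i < p" for i
    using C0 that by simp
  have CK: "C i t \<in> K" if "i < p" "t < Suc q" for i t using C that by blast
  have vC: "v i = (\<Sum>t<q. C i t * w t) + C i q * w q" if "i < p" for i using C[OF that] by simp
  show ?case
  proof (cases "\<forall>i<p. C i q = 0")
    case True
    have "\<forall>i<p. \<exists>c. (\<forall>t<q. c t \<in> K) \<and> v i = (\<Sum>t<q. c t * w t)"
    proof (intro allI impI)
      fix i assume i: "i < p"
      show "\<exists>c. (\<forall>t<q. c t \<in> K) \<and> v i = (\<Sum>t<q. c t * w t)"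
        by (rule exI[of _ "C i"]) (use vC[OF i] True i CK in auto)
    qed
    then have "p \<le> q" using Suc.IH Suc.prems(2) by blast
    then show ?thesis by simp
  next
    case False
    then obtain i0 where i0: "i0 < p" "C i0 q \<noteq> 0" by blast
    then obtain p' where p': "p = Suc p'" by (cases p) auto
    define \<sigma> where "\<sigma> i = (if i < i0 then i else Suc i)" for i
    have \<sigma>p: "\<sigma> i < p" if "i < p'" for i using that p' by (simp add: \<sigma>_def)
    define a where "a i = C i q" for i
    have aK: "a i \<in> K" if "i < p" for i using CK that by (simp add: a_def)
    define r where "r i = a (\<sigma> i) / a i0" for i
    have rK: "r i \<in> K" if "i < p'" for i unfolding r_def using aK \<sigma>p that i0 sf_div[OF sf] by blast
    define v' where "v' i = v (\<sigma> i) - r i * v i0" for i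
    have span': "\<forall>i<p'. \<exists>c. (\<forall>t<q. c t \<in> K) \<and> v' i = (\<Sum>t<q. c t * w t)"
    proof (intro allI impI)
      fix i assume i: "i < p'"
      let ?c = "\<lambda>t. C (\<sigma> i) t - r i * C i0 t"
      have cK: "\<forall>t<q. ?c t \<in> K"
        using CK \<sigma>p[OF i] i0 rK[OF i] sf_diff[OF sf] sf_mult[OF sf] by simp
      have ra: "a (\<sigma> i) - r i * a i0 = 0" unfolding r_def using i0 by (simp add: a_def)
      have "v' i = ((\<Sum>t<q. C (\<sigma> i) t * w t) + a (\<sigma> i) * w q) - r i * ((\<Sum>t<q. C i0 t * w t) + a i0 * w q)"
        unfolding v'_def a_def using vC[OF \<sigma>p[OF i]] vC[OF i0(1)] by simp
      also have "\<dots> = (\<Sum>t<q. C (\<sigma> i) t * w t) - r i * (\<Sum>t<q. C i0 t * w t) + (a (\<sigma> i) - r i * a i0) * w q"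
        by (rule lin_aux)
      also have "\<dots> = (\<Sum>t<q. C (\<sigma> i) t * w t) - r i * (\<Sum>t<q. C i0 t * w t)"
        using ra by simp
      also have "\<dots> = (\<Sum>t<q. ?c t * w t)"
        by (simp add: sum_distrib_left sum_subtractf left_diff_distrib mult.assoc)
      finally have vv: "v' i = (\<Sum>t<q. ?c t * w t)" .
      show "\<exists>c. (\<forall>t<q. c t \<in> K) \<and> v' i = (\<Sum>t<q. c t * w t)"
        by (rule exI[of _ ?c], rule conjI[OF cK vv])
    qed
    have indep': "kindep K p' v'"
      unfolding kindep_def
    proof (rule allI, intro impI)
      fix d assume dK: "\<forall>i<p'. d i \<in> K" and d0: "(\<Sum>i<p'. d i * v' i) = 0"
      define e where "e l = (if l = i0 then - (\<Sum>i<p'. d i * r i)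
                        else d (if l < i0 then l else l - 1))" for l
      have e\<sigma>: "e (\<sigma> i) = d i" for i unfolding e_def \<sigma>_def by auto
      have eK: "\<forall>l<p. e l \<in> K"
      proof (intro allI impI)
        fix l assume l: "l < p"
        show "e l \<in> K"
        proof (cases "l = i0")
          case True
          have "(\<Sum>i<p'. d i * r i) \<in> K"
            by (rule sf_sum[OF sf]) (use dK rK sf_mult[OF sf] in auto)
          then show ?thesis by (simp add: e_def True sf_uminus[OF sf])
        next
          case False
          then have "(if l < i0 then l else l - 1) < p'" using l p' i0(1) by auto
          then show ?thesis unfolding e_def using False dK by simp
        qed
      qed
      have "(\<Sum>l<p. e l * v l) = e i0 * v i0 + (\<Sum>i<p'. e (\<sigma> i) * v (\<sigma> i))"
        unfolding p' \<sigma>_def by (rule sum_skip) (use i0 p' in simp)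
      also have "\<dots> = (\<Sum>i<p'. d i * v' i)"
      proof -
        have "(\<Sum>i<p'. d i * v' i) = (\<Sum>i<p'. d i * v (\<sigma> i)) - (\<Sum>i<p'. d i * r i) * v i0"
          unfolding v'_def by (simp add: right_diff_distrib sum_subtractf sum_distrib_right mult.assoc)
        moreover have "e i0 = - (\<Sum>i<p'. d i * r i)" by (simp add: e_def)
        ultimately show ?thesis unfolding e\<sigma> by simp
      qed
      also have "\<dots> = 0" by (rule d0)
      finally have e0: "\<forall>l<p. e l = 0" using Suc.prems(2) eK unfolding kindep_def by blast
      show "\<forall>i<p'. d i = 0"
      proof (intro allI impI)
        fix i assume "i < p'"
        then have "e (\<sigma> i) = 0" using \<sigma>p e0 by simp
        then show "d i = 0" using e\<sigma> by simp
      qed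
    qed
    have "p' \<le> q" using Suc.IH[OF span' indep'] .
    then show ?thesis using p' by simp
  qed
qed

lemma lin2: "(c::'a::field) * (a - b) * x = c * (a * x) - b * (c * x)"
  by (simp add: algebra_simps)

context galsetup begin

lemma B_indep_set:
  "finite S \<Longrightarrow> S \<subseteq> {..<N} \<Longrightarrow> (\<forall>t\<in>S. c t \<in> K) \<Longrightarrow> (\<Sum>t\<in>S. c t * B t) = 0 \<Longrightarrow> \<forall>t\<in>S. c t = 0"
proof (induction S arbitrary: c rule: finite_induct)
  case empty then show ?case by simp
next
  case (insert a S)
  have aN: "a < N" using insert.prems(1) by auto
  have dz: "\<forall>t\<in>S. c t * (z ^ (E t ! k) - z ^ (E a ! k)) = 0" if k: "k < m" for k
  proof (rule insert.IH)
    show "S \<subseteq> {..<N}" using insert.prems(1) by auto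
    show "\<forall>t\<in>S. c t * (z ^ (E t ! k) - z ^ (E a ! k)) \<in> K"
    proof
      fix t assume "t \<in> S"
      then have "c t \<in> K" using insert.prems(2) by simp
      then show "c t * (z ^ (E t ! k) - z ^ (E a ! k)) \<in> K"
        by (intro sf_mult[OF sf] sf_diff[OF sf] sf_pow[OF sf zK])
    qed
    have g: "th k \<in> Gal K" using th_gal k .
    have tB: "th k (B t) = z ^ (E t ! k) * B t" if "t \<in> insert a S" for t
    proof -
      have "t < N" using insert.prems(1) that by auto
      then show ?thesis unfolding Bm_def by (rule eig[OF E_len k])
    qed
    have cfix: "th k (c t) = c t" if "t \<in> insert a S" for t
      using gal_fix[OF g] insert.prems(2) that by blast
    have "th k (\<Sum>t\<in>insert a S. c t * B t) = (\<Sum>t\<in>insert a S. c t * (z ^ (E t ! k) * B t))"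
      unfolding gal_sum[OF g] using gal_mult[OF g] tB cfix by (intro sum.cong) auto
    then have s1: "(\<Sum>t\<in>insert a S. c t * (z ^ (E t ! k) * B t)) = 0"
      using insert.prems(3) gal_zero[OF g] by simp
    have "(\<Sum>t\<in>insert a S. c t * (z ^ (E t ! k) - z ^ (E a ! k)) * B t)
        = (\<Sum>t\<in>insert a S. c t * (z ^ (E t ! k) * B t) - z ^ (E a ! k) * (c t * B t))"
      by (rule sum.cong) (simp_all only: lin2)
    also have "\<dots> = (\<Sum>t\<in>insert a S. c t * (z ^ (E t ! k) * B t)) - z ^ (E a ! k) * (\<Sum>t\<in>insert a S. c t * B t)"
      by (simp only: sum_subtractf sum_distrib_left)
    also have "\<dots> = 0" using s1 insert.prems(3) by simp
    finally show "(\<Sum>t\<in>S. c t * (z ^ (E t ! k) - z ^ (E a ! k)) * B t) = 0"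
      using insert.hyps by simp
  qed
  have cS: "c t = 0" if t: "t \<in> S" for t
  proof (rule ccontr)
    assume ct: "c t \<noteq> 0"
    have tN: "t < N" using insert.prems(1) t by auto
    have "E t ! k = E a ! k" if k: "k < m" for k
    proof -
      have "z ^ (E t ! k) = z ^ (E a ! k)" using dz[OF k] t ct by auto
      then show ?thesis by (rule z_pow_inj[OF E_lt[OF tN k] E_lt[OF aN k]])
    qed
    then have "E t = E a" using E_len tN aN by (intro nth_equalityI) auto
    then have "t = a" using E_inj tN aN by blast
    then show False using t insert.hyps(2) by simp
  qed
  then have "c a * B a = 0" using insert.prems(3) insert.hyps by simp
  then have "c a = 0" using B_nz aN by simp
  then show ?case using cS by simp
qed

lemma B_kindep: "kindep K N B"
  unfolding kindep_def using B_indep_set[of "{..<N}"] by auto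

lemma B_basis: "is_K_basis K N B"
proof -
  obtain b where b: "is_K_basis K N b" using K_basis_ex by blast
  have span: "\<exists>c. (\<forall>t<N. c t \<in> K) \<and> x = (\<Sum>t<N. c t * B t)" for x
  proof (rule ccontr)
    assume nx: "\<not> (\<exists>c. (\<forall>t<N. c t \<in> K) \<and> x = (\<Sum>t<N. c t * B t))"
    define v where "v i = (if i < N then B i else x)" for i
    have "\<forall>i<Suc N. \<exists>c. (\<forall>t<N. c t \<in> K) \<and> v i = (\<Sum>t<N. c t * b t)"
    proof (intro allI impI)
      fix i show "\<exists>c. (\<forall>t<N. c t \<in> K) \<and> v i = (\<Sum>t<N. c t * b t)"
        using b unfolding is_K_basis_def by (elim conjE) (rule spec)
    qed
    moreover have "kindep K (Suc N) v"
      unfolding kindep_def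
    proof (rule allI, intro impI)
      fix c assume cK: "\<forall>i<Suc N. c i \<in> K" and s: "(\<Sum>i<Suc N. c i * v i) = 0"
      have s': "(\<Sum>i<N. c i * B i) + c N * x = 0" using s by (simp add: v_def)
      have cN: "c N = 0"
      proof (rule ccontr)
        assume cN: "c N \<noteq> 0"
        have "x = (\<Sum>i<N. (- (c i / c N)) * B i)"
        proof -
          have "c N * x = - (\<Sum>i<N. c i * B i)" using s' by (simp add: eq_neg_iff_add_eq_0 add.commute)
          then have "x = - (\<Sum>i<N. c i * B i) / c N" using cN by (simp add: field_simps)
          also have "\<dots> = (\<Sum>i<N. (- (c i / c N)) * B i)"
            by (simp add: sum_divide_distrib sum_negf)
          finally show ?thesis .
        qed
        moreover have "\<forall>t<N. - (c t / c N) \<in> K"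
        proof (intro allI impI)
          fix t assume "t < N"
          then have "c t \<in> K" "c N \<in> K" using cK by auto
          then show "- (c t / c N) \<in> K" by (intro sf_uminus[OF sf] sf_div[OF sf])
        qed
        ultimately have "\<exists>c. (\<forall>t<N. c t \<in> K) \<and> x = (\<Sum>t<N. c t * B t)"
          by (intro exI[of _ "\<lambda>i. - (c i / c N)"] conjI)
        then show False using nx by (rule notE[rotated])
      qed
      then have "(\<Sum>i<N. c i * B i) = 0" using s' by simp
      then have "\<forall>i<N. c i = 0" using B_kindep cK unfolding kindep_def by simp
      then show "\<forall>i<Suc N. c i = 0" using cN less_Suc_eq by auto
    qed
    ultimately have "Suc N \<le> N" by (rule steinitz[OF sf])
    then show False by simp
  qed
  have 1: "\<forall>c. (\<forall>t<N. c t \<in> K) \<longrightarrow> (\<Sum>t<N. c t * B t) = 0 \<longrightarrow> (\<forall>t<N. c t = 0)"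
    using B_kindep unfolding kindep_def .
  have 2: "\<forall>x. \<exists>c. (\<forall>t<N. c t \<in> K) \<and> x = (\<Sum>t<N. c t * B t)" using span by (rule allI)
  show ?thesis unfolding is_K_basis_def by (rule conjI[OF 1 2])
qed

end



lemma dedekind:
  fixes K :: "'l::field set"
  shows "finite S \<Longrightarrow> inj_on \<sigma> S \<Longrightarrow> (\<forall>a\<in>S. \<sigma> a \<in> Gal K) \<Longrightarrow> (\<forall>x. (\<Sum>a\<in>S. c a * \<sigma> a x) = 0)
    \<Longrightarrow> \<forall>a\<in>S. c a = 0"
proof (induction S arbitrary: c rule: finite_induct)
  case empty then show ?case by simp
next
  case (insert a S)
  have ga: "\<sigma> a \<in> Gal K" using insert.prems(2) by simp
  have cz: "\<forall>s\<in>S. c s * (\<sigma> s y - \<sigma> a y) = 0" for y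
  proof (rule insert.IH)
    show "inj_on \<sigma> S" using insert.prems(1) by (rule inj_on_subset) auto
    show "\<forall>a\<in>S. \<sigma> a \<in> Gal K" using insert.prems(2) by simp
    show "\<forall>x. (\<Sum>s\<in>S. c s * (\<sigma> s y - \<sigma> a y) * \<sigma> s x) = 0"
    proof
      fix x
      have h1: "(\<Sum>s\<in>insert a S. c s * (\<sigma> s y * \<sigma> s x)) = 0"
      proof -
        have "(\<Sum>s\<in>insert a S. c s * (\<sigma> s y * \<sigma> s x)) = (\<Sum>s\<in>insert a S. c s * \<sigma> s (y * x))"
        proof (rule sum.cong)
          fix s assume "s \<in> insert a S"
          then have "\<sigma> s \<in> Gal K" using insert.prems(2) by blast
          then show "c s * (\<sigma> s y * \<sigma> s x) = c s * \<sigma> s (y * x)" by (simp add: gal_mult)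
        qed simp
        also have "\<dots> = 0" using insert.prems(3) by blast
        finally show ?thesis .
      qed
      have h2: "(\<Sum>s\<in>insert a S. c s * \<sigma> s x) = 0" using insert.prems(3) by blast
      have "(\<Sum>s\<in>insert a S. c s * (\<sigma> s y - \<sigma> a y) * \<sigma> s x)
          = (\<Sum>s\<in>insert a S. c s * (\<sigma> s y * \<sigma> s x) - \<sigma> a y * (c s * \<sigma> s x))"
        by (rule sum.cong) (simp_all only: lin2)
      also have "\<dots> = (\<Sum>s\<in>insert a S. c s * (\<sigma> s y * \<sigma> s x)) - \<sigma> a y * (\<Sum>s\<in>insert a S. c s * \<sigma> s x)"
        by (simp only: sum_subtractf sum_distrib_left)
      also have "\<dots> = 0" using h1 h2 by simp
      finally show "(\<Sum>s\<in>S. c s * (\<sigma> s y - \<sigma> a y) * \<sigma> s x) = 0"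
        using insert.hyps by simp
    qed
  qed
  have cS: "c s = 0" if s: "s \<in> S" for s
  proof -
    have "s \<noteq> a" using s insert.hyps(2) by auto
    then have "\<sigma> s \<noteq> \<sigma> a" using insert.prems(1) s unfolding inj_on_def by auto
    then obtain y where "\<sigma> s y \<noteq> \<sigma> a y" by auto
    moreover have "c s * (\<sigma> s y - \<sigma> a y) = 0" using cz[of y] s by (rule bspec)
    ultimately show "c s = 0" by simp
  qed
  have "(\<Sum>s\<in>insert a S. c s * \<sigma> s 1) = 0" using insert.prems(3) by blast
  then have "c a * \<sigma> a 1 = 0" using insert.hyps cS by simp
  then have "c a = 0" using gal_one_aux[OF ga] by simp
  then show ?case using cS by simp
qed

lemma zpow_mod: assumes "z ^ n = (1::'a::field)" shows "(z ^ a) ^ b = (z ^ a) ^ (b mod n)"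
proof -
  have "(z ^ a) ^ b = (z ^ a) ^ (n * (b div n) + b mod n)" by simp
  also have "\<dots> = (z ^ a) ^ (n * (b div n)) * (z ^ a) ^ (b mod n)" by (rule power_add)
  also have "(z ^ a) ^ (n * (b div n)) = ((z ^ n) ^ a) ^ (b div n)"
    by (simp add: power_mult[symmetric] ac_simps)
  also have "\<dots> = 1" using assms by simp
  finally show ?thesis by simp
qed

lemma sum_list_mod_le: "sum_list (map (\<lambda>x. x mod n) e) \<le> sum_list (e::nat list)"
  by (induction e) (auto intro: add_mono)

context galsetup begin

abbreviation "Dr (r::nat) \<equiv> {j\<in>Delta n m. sum_list j \<le> r}"
abbreviation "Eset (r::nat) \<equiv> {e::nat list. length e = m \<and> sum_list e \<le> r}"

lemma finite_Eset: "finite (Eset r)"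
proof (rule finite_subset)
  show "Eset r \<subseteq> {xs. set xs \<subseteq> {0..r} \<and> length xs = m}"
  proof
    fix e assume e: "e \<in> Eset r"
    have "set e \<subseteq> {0..r}"
    proof
      fix x assume "x \<in> set e"
      then have "x \<le> sum_list e" by (rule member_le_sum_list) simp
      then show "x \<in> {0..r}" using e by simp
    qed
    then show "e \<in> {xs. set xs \<subseteq> {0..r} \<and> length xs = m}" using e by simp
  qed
  show "finite {xs. set xs \<subseteq> {0..r} \<and> length xs = m}" by (rule finite_lists_length_eq) simp
qed

lemma Dr_sub: "Dr r \<subseteq> Eset r" unfolding Delta_def by auto

lemma rows_core:
  fixes k :: nat
  assumes js: "bij_betw js {0..<k} (Dr r)"
    and hyp: "\<forall>t<N. (\<Sum>a<k. c a * mono (X t) (js a)) = 0"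
  shows "\<forall>a<k. c a = 0"
proof -
  have jsD: "js a \<in> Delta n m" if "a < k" for a
  proof -
    have "a \<in> {0..<k}" using that by simp
    then have "js a \<in> Dr r" using bij_betwE[OF js] by blast
    then show ?thesis by simp
  qed
  let ?\<sigma> = "\<lambda>a. thpow th (js a)"
  have inj: "inj_on ?\<sigma> {..<k}"
  proof (rule inj_onI)
    fix a b assume ab: "a \<in> {..<k}" "b \<in> {..<k}" "?\<sigma> a = ?\<sigma> b"
    then have "js a = js b" using bij jsD unfolding bij_betw_def inj_on_def by auto
    then show "a = b" using js ab unfolding bij_betw_def inj_on_def by auto
  qed
  have gal: "\<forall>a\<in>{..<k}. ?\<sigma> a \<in> Gal K" using thpow_gal jsD by auto
  have all: "\<forall>x. (\<Sum>a\<in>{..<k}. c a * ?\<sigma> a x) = 0"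
  proof
    fix x
    obtain d where d: "\<forall>t<N. d t \<in> K" "x = (\<Sum>t<N. d t * B t)"
      using B_basis unfolding is_K_basis_def by blast
    have sx: "?\<sigma> a x = (\<Sum>t<N. d t * (mono (X t) (js a) * B t))" if a: "a < k" for a
    proof -
      have g: "?\<sigma> a \<in> Gal K" using gal a by auto
      have "?\<sigma> a x = (\<Sum>t<N. ?\<sigma> a (d t * B t))" unfolding d(2) by (rule gal_sum[OF g])
      also have "\<dots> = (\<Sum>t<N. d t * (mono (X t) (js a) * B t))"
      proof (rule sum.cong)
        fix t assume "t \<in> {..<N}"
        then show "?\<sigma> a (d t * B t) = d t * (mono (X t) (js a) * B t)"
          using gal_mult[OF g] gal_fix[OF g] d(1) thpow_B[OF jsD[OF a]] by simp
      qed simp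
      finally show ?thesis .
    qed
    have "(\<Sum>a\<in>{..<k}. c a * ?\<sigma> a x) = (\<Sum>a<k. \<Sum>t<N. c a * (d t * (mono (X t) (js a) * B t)))"
      using sx by (simp add: sum_distrib_left)
    also have "\<dots> = (\<Sum>t<N. \<Sum>a<k. c a * (d t * (mono (X t) (js a) * B t)))"
      by (rule sum.swap)
    also have "\<dots> = (\<Sum>t<N. (d t * B t) * (\<Sum>a<k. c a * mono (X t) (js a)))"
      by (simp add: sum_distrib_left mult_ac)
    also have "\<dots> = 0" using hyp by simp
    finally show "(\<Sum>a\<in>{..<k}. c a * ?\<sigma> a x) = 0" .
  qed
  show ?thesis using dedekind[OF _ inj gal all] by simp
qed

lemma sum_Dr_reindex:
  fixes k :: nat
  assumes js: "bij_betw js {0..<k} (Dr r)"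
  shows "(\<Sum>j\<in>Dr r. h j) = (\<Sum>a<k. h (js a))"
  unfolding atLeast0LessThan[symmetric] using sum.reindex_bij_betw[OF js, of h] by simp

lemma mono_red:
  assumes "t < N" "length e = m"
  shows "mono (X t) (map (\<lambda>x. x mod n) e) = mono (X t) e"
  unfolding mono_def Xpt_def using assms zpow_mod[OF z_pow_n] by simp

lemma red_Dr:
  assumes "e \<in> Eset r"
  shows "map (\<lambda>x. x mod n) e \<in> Dr r"
  using assms n2 sum_list_mod_le[of n e] unfolding Delta_def by auto

lemma hrm_eq:
  fixes k :: nat
  assumes js: "bij_betw js {0..<k} (Dr r)"
  defines "Y \<equiv> mat k N (\<lambda>(a, t). mono (X t) (js a))"
  shows "row_span K Y = HRM K N X r m"
proof
  have Yi: "Y $$ (a, t) = mono (X t) (js a)" if "a < k" "t < N" for a t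
    using that unfolding Y_def by simp
  have dims: "dim_row Y = k" "dim_col Y = N" unfolding Y_def by auto
  have jsD: "js a \<in> Dr r" if "a < k" for a using bij_betwE[OF js] that by auto
  have inj: "inj_on js {0..<k}" using js by (simp add: bij_betw_def)
  have img: "js ` {0..<k} = Dr r" using js by (simp add: bij_betw_def)
  show "row_span K Y \<subseteq> HRM K N X r m"
  proof
    fix v assume "v \<in> row_span K Y"
    then obtain c where c: "\<forall>i<k. c i \<in> K" "v = vec N (\<lambda>t. \<Sum>i<k. c i * Y $$ (i, t))"
      unfolding row_span_def dims by blast
    define c' where "c' e = (if e \<in> Dr r then c (inv_into {0..<k} js e) else 0)" for e
    have c'K: "\<forall>e. c' e \<in> K"
    proof
      fix e show "c' e \<in> K"
      proof (cases "e \<in> Dr r")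
        case True
        then have "inv_into {0..<k} js e \<in> {0..<k}" using img by (metis inv_into_into)
        moreover from True have "c' e = c (inv_into {0..<k} js e)" unfolding c'_def by (rule if_P)
        ultimately show ?thesis using c(1) by simp
      next
        case False
        then have "c' e = 0" unfolding c'_def by (rule if_not_P)
        then show ?thesis using sf0[OF sf] by simp
      qed
    qed
    have "v = vec N (\<lambda>t. \<Sum>e\<in>Eset r. c' e * mono (X t) e)"
    proof (rule eq_vecI)
      fix t assume "t < dim_vec (vec N (\<lambda>t. \<Sum>e\<in>Eset r. c' e * mono (X t) e))"
      then have t: "t < N" by simp
      have "(\<Sum>e\<in>Eset r. c' e * mono (X t) e) = (\<Sum>e\<in>Dr r. c' e * mono (X t) e)"
      proof (rule sum.mono_neutral_right[OF finite_Eset Dr_sub], intro ballI)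
        fix e assume "e \<in> Eset r - Dr r"
        then have "e \<notin> Dr r" by (metis DiffD2)
        then have "c' e = 0" unfolding c'_def by (rule if_not_P)
        then show "c' e * mono (X t) e = 0" by simp
      qed
      also have "\<dots> = (\<Sum>a<k. c' (js a) * mono (X t) (js a))" by (rule sum_Dr_reindex[OF js])
      also have "\<dots> = (\<Sum>a<k. c a * Y $$ (a, t))"
      proof (rule sum.cong)
        fix a assume a: "a \<in> {..<k}"
        then have "inv_into {0..<k} js (js a) = a" using inv_into_f_f[OF inj] by simp
        then show "c' (js a) * mono (X t) (js a) = c a * Y $$ (a, t)"
          using a jsD[of a] Yi[of a t] t by (simp add: c'_def)
      qed simp
      finally show "v $ t = vec N (\<lambda>t. \<Sum>e\<in>Eset r. c' e * mono (X t) e) $ t"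
        using t c(2) by simp
    qed (simp add: c(2))
    then show "v \<in> HRM K N X r m" unfolding HRM_def mem_Collect_eq
      by (intro exI[of _ c'] conjI c'K)
  qed
  show "HRM K N X r m \<subseteq> row_span K Y"
  proof
    fix v assume "v \<in> HRM K N X r m"
    then obtain c where c: "\<forall>e. c e \<in> K" "v = vec N (\<lambda>t. \<Sum>e\<in>Eset r. c e * mono (X t) e)"
      unfolding HRM_def by blast
    let ?red = "\<lambda>e. map (\<lambda>x. x mod n) e"
    define c'' where "c'' i = (\<Sum>e\<in>{e \<in> Eset r. ?red e = js i}. c e)" for i
    have c''K: "\<forall>i<k. c'' i \<in> K"
    proof (intro allI impI)
      fix i show "c'' i \<in> K" unfolding c''_def by (rule sf_sum[OF sf], rule c(1)[rule_format])
    qed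
    let ?g = "\<lambda>e. inv_into {0..<k} js (?red e)"
    have gS: "?g ` Eset r \<subseteq> {0..<k}"
      using red_Dr img by (auto intro: inv_into_into)
    have gset: "{e \<in> Eset r. ?g e = i} = {e \<in> Eset r. ?red e = js i}" if i: "i < k" for i
    proof (rule equalityI; rule subsetI)
      fix e assume e: "e \<in> {e \<in> Eset r. ?g e = i}"
      then have "?red e \<in> js ` {0..<k}" using red_Dr img by blast
      then have "js (?g e) = ?red e" by (rule f_inv_into_f)
      then show "e \<in> {e \<in> Eset r. ?red e = js i}" using e by simp
    next
      fix e assume e: "e \<in> {e \<in> Eset r. ?red e = js i}"
      then have "?g e = inv_into {0..<k} js (js i)" by simp
      also have "\<dots> = i" using inv_into_f_f[OF inj] i by simp
      finally show "e \<in> {e \<in> Eset r. ?g e = i}" using e by simp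
    qed
    have "v = vec N (\<lambda>t. \<Sum>i<k. c'' i * Y $$ (i, t))"
    proof (rule eq_vecI)
      fix t assume "t < dim_vec (vec N (\<lambda>t. \<Sum>i<k. c'' i * Y $$ (i, t)))"
      then have t: "t < N" by simp
      have "(\<Sum>i<k. c'' i * Y $$ (i, t)) = (\<Sum>i<k. \<Sum>e\<in>{e \<in> Eset r. ?red e = js i}. c e * mono (X t) (js i))"
        using Yi t by (simp add: c''_def sum_distrib_right)
      also have "\<dots> = (\<Sum>i\<in>{0..<k}. \<Sum>e\<in>{e \<in> Eset r. ?g e = i}. c e * mono (X t) e)"
      proof (rule sum.cong)
        fix i assume i: "i \<in> {0..<k}"
        show "(\<Sum>e\<in>{e \<in> Eset r. ?red e = js i}. c e * mono (X t) (js i))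
            = (\<Sum>e\<in>{e \<in> Eset r. ?g e = i}. c e * mono (X t) e)"
          unfolding gset[of i, OF i[simplified]]
        proof (rule sum.cong)
          fix e assume e: "e \<in> {e \<in> Eset r. ?red e = js i}"
          then have js_e: "js i = ?red e" and le: "length e = m" by auto
          have "mono (X t) (js i) = mono (X t) e"
            unfolding js_e by (rule mono_red[OF t le])
          then show "c e * mono (X t) (js i) = c e * mono (X t) e" by simp
        qed simp
      qed (simp add: atLeast0LessThan)
      also have "\<dots> = (\<Sum>e\<in>Eset r. c e * mono (X t) e)"
        by (rule sum.group[OF finite_Eset _ gS]) simp
      finally show "v $ t = vec N (\<lambda>t. \<Sum>i<k. c'' i * Y $$ (i, t)) $ t"
        using t c(2) by simp
    qed (simp add: c(2))
    then show "v \<in> row_span K Y" unfolding row_span_def dims mem_Collect_eq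
      by (intro exI[of _ c''] conjI c''K)
  qed
qed

lemma sum_delta_gal:
  assumes "\<sigma> \<in> Gal K"
  shows "(\<Sum>g\<in>Gal K. delta \<sigma> g * g y) = \<sigma> y"
proof -
  have "(\<Sum>g\<in>Gal K. delta \<sigma> g * g y) = (\<Sum>g\<in>Gal K. if g = \<sigma> then \<sigma> y else 0)"
    by (rule sum.cong) (auto simp: delta_def)
  also have "\<dots> = \<sigma> y" using assms finG by simp
  finally show ?thesis .
qed

lemma ev_P:
  assumes "t < N"
  shows "ev (Gal K) N B (\<lambda>g. \<Sum>j\<in>Dr r. c j * delta (thpow th j) g) $ t
       = (\<Sum>j\<in>Dr r. c j * (mono (X t) j * B t))"
proof -
  have "ev (Gal K) N B (\<lambda>g. \<Sum>j\<in>Dr r. c j * delta (thpow th j) g) $ t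
      = (\<Sum>g\<in>Gal K. \<Sum>j\<in>Dr r. c j * (delta (thpow th j) g * g (B t)))"
    using assms by (simp add: ev_def sum_distrib_right mult.assoc)
  also have "\<dots> = (\<Sum>j\<in>Dr r. \<Sum>g\<in>Gal K. c j * (delta (thpow th j) g * g (B t)))"
    by (rule sum.swap)
  also have "\<dots> = (\<Sum>j\<in>Dr r. c j * (mono (X t) j * B t))"
  proof (rule sum.cong)
    fix j assume j: "j \<in> Dr r"
    then have jD: "j \<in> Delta n m" by simp
    have "(\<Sum>g\<in>Gal K. c j * (delta (thpow th j) g * g (B t))) = c j * (\<Sum>g\<in>Gal K. delta (thpow th j) g * g (B t))"
      by (simp add: sum_distrib_left)
    also have "\<dots> = c j * (mono (X t) j * B t)"
      using sum_delta_gal[OF thpow_gal[OF jD]] thpow_B[OF jD assms] by simp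
    finally show "(\<Sum>g\<in>Gal K. c j * (delta (thpow th j) g * g (B t))) = c j * (mono (X t) j * B t)" .
  qed simp
  finally show ?thesis .
qed

lemma rm_eq:
  fixes k :: nat
  assumes js: "bij_betw js {0..<k} (Dr r)"
  defines "Y \<equiv> mat k N (\<lambda>(a, t). mono (X t) (js a))"
  shows "row_span UNIV (Y * DiagM N B) = ev (Gal K) N B ` RM_theta th n m r"
proof
  have dims: "dim_row (Y * DiagM N B) = k" "dim_col (Y * DiagM N B) = N" unfolding Y_def by auto
  have YD: "(Y * DiagM N B) $$ (a, t) = mono (X t) (js a) * B t" if "a < k" "t < N" for a t
    using mult_DiagM_index[of Y N a t B] that unfolding Y_def by simp
  have inj: "inj_on js {0..<k}" using js by (simp add: bij_betw_def)
  have dimev: "dim_vec (ev (Gal K) N B P) = N" for P by (simp add: ev_def)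
  show "row_span UNIV (Y * DiagM N B) \<subseteq> ev (Gal K) N B ` RM_theta th n m r"
  proof
    fix v assume "v \<in> row_span UNIV (Y * DiagM N B)"
    then obtain c where c: "v = vec N (\<lambda>t. \<Sum>i<k. c i * (Y * DiagM N B) $$ (i, t))"
      unfolding row_span_def dims by blast
    define c' where "c' j = c (inv_into {0..<k} js j)" for j
    let ?P = "\<lambda>g. \<Sum>j\<in>Dr r. c' j * delta (thpow th j) g"
    have "v = ev (Gal K) N B ?P"
    proof (rule eq_vecI)
      fix t assume "t < dim_vec (ev (Gal K) N B ?P)"
      then have t: "t < N" by (simp add: dimev)
      have "ev (Gal K) N B ?P $ t = (\<Sum>j\<in>Dr r. c' j * (mono (X t) j * B t))" by (rule ev_P[OF t])
      also have "\<dots> = (\<Sum>a<k. c' (js a) * (mono (X t) (js a) * B t))" by (rule sum_Dr_reindex[OF js])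
      also have "\<dots> = (\<Sum>i<k. c i * (Y * DiagM N B) $$ (i, t))"
      proof (rule sum.cong)
        fix a assume a: "a \<in> {..<k}"
        then have "inv_into {0..<k} js (js a) = a" using inv_into_f_f[OF inj] by simp
        then show "c' (js a) * (mono (X t) (js a) * B t) = c a * (Y * DiagM N B) $$ (a, t)"
          using a YD[of a t] t by (simp add: c'_def)
      qed simp
      finally show "v $ t = ev (Gal K) N B ?P $ t" using c t by simp
    qed (simp add: c dimev)
    moreover have "?P \<in> RM_theta th n m r" unfolding RM_theta_def mem_Collect_eq
      by (rule exI[of _ c'], rule refl)
    ultimately show "v \<in> ev (Gal K) N B ` RM_theta th n m r" by (rule image_eqI)
  qed
  show "ev (Gal K) N B ` RM_theta th n m r \<subseteq> row_span UNIV (Y * DiagM N B)"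
  proof
    fix v assume "v \<in> ev (Gal K) N B ` RM_theta th n m r"
    then obtain P where P: "P \<in> RM_theta th n m r" "v = ev (Gal K) N B P" by blast
    then obtain c where c: "P = (\<lambda>g. \<Sum>j\<in>Dr r. c j * delta (thpow th j) g)"
      unfolding RM_theta_def by blast
    have "v = vec N (\<lambda>t. \<Sum>i<k. (c \<circ> js) i * (Y * DiagM N B) $$ (i, t))"
    proof (rule eq_vecI)
      fix t assume "t < dim_vec (vec N (\<lambda>t. \<Sum>i<k. (c \<circ> js) i * (Y * DiagM N B) $$ (i, t)))"
      then have t: "t < N" by simp
      have "v $ t = (\<Sum>j\<in>Dr r. c j * (mono (X t) j * B t))" unfolding P(2) c by (rule ev_P[OF t])
      also have "\<dots> = (\<Sum>a<k. c (js a) * (mono (X t) (js a) * B t))" by (rule sum_Dr_reindex[OF js])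
      also have "\<dots> = (\<Sum>i<k. (c \<circ> js) i * (Y * DiagM N B) $$ (i, t))"
        by (rule sum.cong) (use YD t in auto)
      finally show "v $ t = vec N (\<lambda>t. \<Sum>i<k. (c \<circ> js) i * (Y * DiagM N B) $$ (i, t)) $ t"
        using t by simp
    qed (simp add: P(2) dimev)
    then show "v \<in> row_span UNIV (Y * DiagM N B)" unfolding row_span_def dims mem_Collect_eq
      by (intro exI[of _ "c \<circ> js"] conjI) simp_all
  qed
qed

lemma part34:
  fixes k :: nat
  assumes js: "bij_betw js {0..<k} (Dr r)"
  defines "Y \<equiv> mat k N (\<lambda>(a, t). mono (X t) (js a))"
  shows "gen_matrix K (HRM K N X r m) Y \<and> gen_matrix UNIV (ev (Gal K) N B ` RM_theta th n m r) (Y * DiagM N B)"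
proof -
  have dims: "dim_row Y = k" "dim_col Y = N" unfolding Y_def by auto
  have dims2: "dim_row (Y * DiagM N B) = k" "dim_col (Y * DiagM N B) = N" unfolding Y_def by auto
  have Yi: "Y $$ (a, t) = mono (X t) (js a)" if "a < k" "t < N" for a t
    using that unfolding Y_def by simp
  have YD: "(Y * DiagM N B) $$ (a, t) = mono (X t) (js a) * B t" if "a < k" "t < N" for a t
    using mult_DiagM_index[of Y N a t B] that dims Yi by simp
  have ind1: "rows_indep K Y" unfolding rows_indep_def dims
  proof (rule allI, intro impI)
    fix c assume h: "\<forall>t<N. (\<Sum>i<k. c i * Y $$ (i, t)) = 0"
    have "\<forall>t<N. (\<Sum>a<k. c a * mono (X t) (js a)) = 0"
      using h Yi by simp
    then show "\<forall>i<k. c i = 0" by (rule rows_core[OF js])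
  qed
  have ind2: "rows_indep UNIV (Y * DiagM N B)" unfolding rows_indep_def dims2
  proof (rule allI, intro impI)
    fix c assume h: "\<forall>t<N. (\<Sum>i<k. c i * (Y * DiagM N B) $$ (i, t)) = 0"
    have "\<forall>t<N. (\<Sum>a<k. c a * mono (X t) (js a)) = 0"
    proof (intro allI impI)
      fix t assume t: "t < N"
      have "(\<Sum>a<k. c a * mono (X t) (js a)) * B t = (\<Sum>i<k. c i * (Y * DiagM N B) $$ (i, t))"
        using YD t by (simp add: sum_distrib_right mult.assoc)
      also have "\<dots> = 0" using h t by simp
      finally show "(\<Sum>a<k. c a * mono (X t) (js a)) = 0" using B_nz[OF t] by simp
    qed
    then show "\<forall>i<k. c i = 0" by (rule rows_core[OF js])
  qed
  have h1: "row_span K Y = HRM K N X r m" unfolding Y_def by (rule hrm_eq[OF js])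
  have h2: "row_span UNIV (Y * DiagM N B) = ev (Gal K) N B ` RM_theta th n m r"
    unfolding Y_def by (rule rm_eq[OF js])
  show ?thesis unfolding gen_matrix_def by (intro conjI ind1 ind2 h1 h2)
qed

end

theorem mainTheorem18:
  fixes K :: "'l::field set" and n m r N :: nat and z :: 'l
    and th :: "nat \<Rightarrow> 'l \<Rightarrow> 'l" and alpha :: "nat \<Rightarrow> 'l"
  assumes n2: "n \<ge> 2"
    and N_def: "N = n ^ m"
    and gal: "galois_ext_of_degree K N"
    and zK: "z \<in> K" and zprim: "primitive_root n z"
    and thG: "\<forall>k<m. th k \<in> Gal K"
    and comm: "\<forall>k<m. \<forall>l<m. th k \<circ> th l = th l \<circ> th k"
    and bij: "bij_betw (thpow th) (Delta n m) (Gal K)"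
    and anz: "\<forall>k<m. alpha k \<noteq> 0"
    and a_fix: "\<forall>k<m. \<forall>l<m. k \<noteq> l \<longrightarrow> th k (alpha l) = alpha l"
    and a_mul: "\<forall>k<m. th k (alpha k) = z * alpha k"
    and r_le: "r \<le> m * (n - 1)"
  shows "is_K_basis K N (Bm n m alpha)
    \<and> (\<forall>j\<in>Delta n m.
         mat_of_rows N [ev (Gal K) N (Bm n m alpha) (delta (thpow th j))]
         = mat_of_rows N [vec N (\<lambda>t. mono (Xpt n m z t) j)] * DiagM N (Bm n m alpha))
    \<and> (\<forall>k js. bij_betw js {0..<k} {j\<in>Delta n m. sum_list j \<le> r} \<longrightarrow>
         (let Y = mat k N (\<lambda>(a, t). mono (Xpt n m z t) (js a)) in
            gen_matrix K (HRM K N (Xpt n m z) r m) Y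
          \<and> gen_matrix UNIV (ev (Gal K) N (Bm n m alpha) ` RM_theta th n m r)
               (Y * DiagM N (Bm n m alpha))))"
proof -
  have G: "galsetup K n m N z th alpha"
    unfolding galsetup_def using n2 N_def gal zK zprim thG bij anz a_fix a_mul by blast
  show ?thesis
  proof (intro conjI)
    show "is_K_basis K N (Bm n m alpha)" by (rule galsetup.B_basis[OF G])
    show "\<forall>j\<in>Delta n m.
         mat_of_rows N [ev (Gal K) N (Bm n m alpha) (delta (thpow th j))]
         = mat_of_rows N [vec N (\<lambda>t. mono (Xpt n m z t) j)] * DiagM N (Bm n m alpha)"
      by (intro ballI) (rule galsetup.part2[OF G])
    show "\<forall>k js. bij_betw js {0..<k} {j\<in>Delta n m. sum_list j \<le> r} \<longrightarrow>
         (let Y = mat k N (\<lambda>(a, t). mono (Xpt n m z t) (js a)) in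
            gen_matrix K (HRM K N (Xpt n m z) r m) Y
          \<and> gen_matrix UNIV (ev (Gal K) N (Bm n m alpha) ` RM_theta th n m r)
               (Y * DiagM N (Bm n m alpha)))"
    proof (intro allI impI)
      fix k :: nat and js assume js: "bij_betw js {0..<k} {j\<in>Delta n m. sum_list j \<le> r}"
      show "let Y = mat k N (\<lambda>(a, t). mono (Xpt n m z t) (js a)) in
            gen_matrix K (HRM K N (Xpt n m z) r m) Y
          \<and> gen_matrix UNIV (ev (Gal K) N (Bm n m alpha) ` RM_theta th n m r)
               (Y * DiagM N (Bm n m alpha))"
        unfolding Let_def by (rule galsetup.part34[OF G js])
    qed
  qed
qed

end
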